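(* Let $\{(\mathbf{x}^k,\mathbf{r}^k,\boldsymbol{\lambda}^k)\}$ be generated by Algorithm 1. If $0<\rho\le\frac{\beta}{m}$ and $\mathbf{P}_i\succeq L_i\mathbf{I}+\beta\mathbf{A}_i^\top\mathbf{A}_i$ for all $i=1,\ldots,m$, then $F(\mathbf{x}^k)\to F(\mathbf{x}^* )$ in probability and $\|\mathbf{r}^k\|\to0$ in probability, where $\mathbf{x}^*$ is as in the solution-existence assumption.
   Context: Problem: $\min_{\mathbf{x}} F(\mathbf{x}):=f(\mathbf{x})+g(\mathbf{x})$ s.t. $\mathbf{A}\mathbf{x}=\mathbf{b}$, where $\mathbf{x}=(\mathbf{x}_1;\ldots;\mathbf{x}_m)$ with blocks $\mathbf{x}_i\in\mathbb{R}^{n_i}$, $g(\mathbf{x})=\sum_{i=1}^m g_i(\mathbf{x}_i)$, $\mathbf{A}=[\mathbf{A}_1,\ldots,\mathbf{A}_m]$ with $\mathbf{A}_i\in\mathbb{R}^{q\times n_i}$, $\mathbf{b}\in\mathbb{R}^q$; $f$ is convex and continuously differentiable, each $g_i$ is proper, convex, lower semicontinuous. Define $\Phi(\bar{\mathbf{x}},\mathbf{x},\boldsymbol{\lambda})=F(\bar{\mathbf{x}})-F(\mathbf{x})-\langle\boldsymbol{\lambda},\mathbf{A}\bar{\mathbf{x}}-\mathbf{b}\rangle$. $\mathbf{U}_i\mathbf{y}$ denotes the vector whose $i$-th block is $\mathbf{y}_i$ and other blocks zero. Assumption (existence of a solution): there is $(\mathbf{x}^*,\boldsymbol{\lambda}^*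 )$ with $\mathbf{A}\mathbf{x}^*=\mathbf{b}$ and $\Phi(\mathbf{x},\mathbf{x}^*,\boldsymbol{\lambda}^* )\ge0$ for all $\mathbf{x}$. Assumption (gradient Lipschitz continuity): there are constants $L_i>0$ and $L_r$ with $\|\nabla_i f(\mathbf{x}+\mathbf{U}_i\mathbf{y})-\nabla_i f(\mathbf{x})\|\le L_i\|\mathbf{y}_i\|$ and $\|\nabla f(\mathbf{x}+\mathbf{U}_i\mathbf{y})-\nabla f(\mathbf{x})\|\le L_r\|\mathbf{y}_i\|$ for all $i,\mathbf{x},\mathbf{y}$. Algorithm 1 (randomized primal-dual block update): choose $\mathbf{x}^0$, set $\boldsymbol{\lambda}^0=\mathbf{0}$, $\mathbf{r}^0=\mathbf{A}\mathbf{x}^0-\mathbf{b}$, parameters $\beta>0,\rho>0$, symmetric PSD matrices $\mathbf{P}_i$. For $k=0,1,\ldots$: pick $i_k\in\{1,\ldots,m\}$ uniformly at random, independent of $i_0,\ldots,i_{k-1}$; set $\mathbf{x}_i^{k+1}=\mathbf{x}_i^k$ for $i\ne i_k$ and $$\mathbf{x}_{i_k}^{k+1}\in\arg\min_{\mathbf{x}_{i_k}}\big\langle\nabla_{i_k} f(\mathbf{x}^k)-\mathbf{A}_{i_k}^\top(\boldsymbol{\lambda}^k-\beta\mathbf{r}^k),\mathbf{x}_{i_k}\big\rangle+g_{i_k}(\mathbf{x}_{i_k})+\tfrac12\|\mathbf{x}_{i_k}-\mathbf{x}_{i_k}^k\|_{\mathbf{P}_{i_k}}^2$$ (with $\|\mathbf{z}\|_{\mathbf{M}}^2=\mathbf{z}^\top\mathbf{M}\mathbf{z}$);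 then $\mathbf{r}^{k+1}=\mathbf{r}^k+\mathbf{A}_{i_k}(\mathbf{x}_{i_k}^{k+1}-\mathbf{x}_{i_k}^k)$ (so $\mathbf{r}^k=\mathbf{A}\mathbf{x}^k-\mathbf{b}$) and $\boldsymbol{\lambda}^{k+1}=\boldsymbol{\lambda}^k-\rho\mathbf{r}^{k+1}$. *)

theory Defs
  imports "HOL-Analysis.Analysis" "HOL-Probability.Probability"
begin

text \<open>Vectors x in R^n are modelled as real^'n; the coordinates are partitioned into
  blocks 0..<m by a map blk :: 'n => nat.  U i y keeps the i-th block of y and zeroes
  the rest (the operator U_i of the paper, composed with block extraction).\<close>

definition blockU :: "('n::finite \<Rightarrow> nat) \<Rightarrow> nat \<Rightarrow> real^'n \<Rightarrow> real^'n" where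
  "blockU blk i y = (\<chi> j. if blk j = i then y $ j else 0)"

text \<open>Extended-real valued convexity (with the convention 0 * \<infinity> = 0).\<close>
definition ereal_convex :: "('a::real_vector \<Rightarrow> ereal) \<Rightarrow> bool" where
  "ereal_convex g \<longleftrightarrow> (\<forall>x y t. 0 \<le> t \<and> t \<le> 1 \<longrightarrow>
      g ((1 - t) *\<^sub>R x + t *\<^sub>R y) \<le> ereal (1 - t) * g x + ereal t * g y)"

definition ereal_proper :: "('a \<Rightarrow> ereal) \<Rightarrow> bool" where
  "ereal_proper g \<longleftrightarrow> (\<forall>x. g x \<noteq> -\<infinity>) \<and> (\<exists>x. g x \<noteq> \<infinity>)"

definition ereal_lsc :: "('a::topological_space \<Rightarrow> ereal) \<Rightarrow> bool" where
  "ereal_lsc g \<longleftrightarrow> (\<forall>c. closed {x. g x \<le> c})"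

definition objF :: "nat \<Rightarrow> ('a \<Rightarrow> real) \<Rightarrow> (nat \<Rightarrow> 'a \<Rightarrow> ereal) \<Rightarrow> 'a \<Rightarrow> ereal" where
  "objF m f g x = ereal (f x) + (\<Sum>i<m. g i x)"

end

theory Submission
  imports Defs
begin


lemma blockU_nth [simp]: "blockU blk i y $ j = (if blk j = i then y $ j else 0)"
  by (simp add: blockU_def)

lemma blockU_idem [simp]: "blockU blk i (blockU blk i y) = blockU blk i y"
  by (simp add: vec_eq_iff)

lemma blockU_add: "blockU blk i (a + b) = blockU blk i a + blockU blk i b"
  by (simp add: vec_eq_iff)

lemma blockU_diff: "blockU blk i (a - b) = blockU blk i a - blockU blk i b"
  by (simp add: vec_eq_iff)

lemma blockU_scale: "blockU blk i (c *\<^sub>R a) = c *\<^sub>R blockU blk i a"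
  by (simp add: vec_eq_iff)

lemma blockU_other: "i \<noteq> j \<Longrightarrow> blockU blk j (blockU blk i y) = 0"
  by (simp add: vec_eq_iff)

lemma blockU_inner: "(blockU blk i a) \<bullet> b = a \<bullet> (blockU blk i b)"
  by (simp add: inner_vec_def) (rule sum.cong, auto)

lemma blockU_sum: assumes "\<forall>j. blk j < m" shows "(\<Sum>i<m. blockU blk i y) = y"
proof -
  have "(\<Sum>i<m. blockU blk i y) $ j = y $ j" for j
  proof -
    have "(\<Sum>i<m. blockU blk i y) $ j = (\<Sum>i<m. (if blk j = i then y $ j else 0))"
      by (simp add: sum_component)
    also have "\<dots> = y $ j" using assms by (simp add: sum.delta)
    finally show ?thesis .
  qed
  then show ?thesis by (simp add: vec_eq_iff)
qed

lemma inner_transpose: "(a::real^'m) \<bullet> (M *v h) = (transpose M *v a) \<bullet> (h::real^'n)"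
  by (metis dot_lmul_matrix transpose_transpose vector_transpose_matrix)


locale rpd =
  fixes m :: nat and blk :: "'n::finite \<Rightarrow> nat"
    and f :: "real^'n \<Rightarrow> real" and gf :: "real^'n \<Rightarrow> real^'n"
    and g :: "nat \<Rightarrow> real^'n \<Rightarrow> ereal"
    and A :: "real^'n^'q::finite" and b :: "real^'q"
    and L :: "nat \<Rightarrow> real" and \<beta> \<rho> :: real and P :: "nat \<Rightarrow> real^'n^'n"
    and xs :: "real^'n" and lams :: "real^'q"
  assumes blk_range: "\<forall>j. blk j < m"
    and f_convex: "convex_on UNIV f"
    and f_grad: "\<forall>z. (f has_derivative (\<lambda>h. gf z \<bullet> h)) (at z)"
    and g_block: "\<forall>i<m. \<forall>z. g i z = g i (blockU blk i z)"
    and g_proper: "\<forall>i<m. ereal_proper (g i)"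
    and g_convex: "\<forall>i<m. ereal_convex (g i)"
    and sol_feas: "A *v xs = b"
    and sol_opt: "\<forall>z. objF m f g xs + ereal (lams \<bullet> (A *v z - b)) \<le> objF m f g z"
    and L_pos: "\<forall>i<m. L i > 0"
    and Lip_i: "\<forall>i<m. \<forall>z y. norm (blockU blk i (gf (z + blockU blk i y)) - blockU blk i (gf z)) \<le> L i * norm (blockU blk i y)"
    and beta_pos: "\<beta> > 0"
    and rho_pos: "0 < \<rho>" and rho_le: "\<rho> \<le> \<beta> / real m"
    and P_sym: "\<forall>i<m. transpose (P i) = P i"
    and P_psd: "\<forall>i<m. \<forall>y. 0 \<le> y \<bullet> (P i *v y)"
    and P_ge: "\<forall>i<m. \<forall>y. blockU blk i y = y \<longrightarrow>
                 L i * (y \<bullet> y) + \<beta> * (norm (A *v y))\<^sup>2 \<le> y \<bullet> (P i *v y)"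
begin

abbreviation U where "U \<equiv> blockU blk"

lemma m_pos: "m > 0"
  using blk_range by (metis gr_zeroI not_less0)

lemma P_symm: "i < m \<Longrightarrow> a \<bullet> (P i *v h) = h \<bullet> (P i *v a)"
  using P_sym by (metis inner_commute inner_transpose)

lemma CT: "f y \<ge> f x + gf x \<bullet> (y - x)"
proof -
  define h where "h = y - x"
  define \<phi> where "\<phi> t = f (x + t *\<^sub>R h)" for t :: real
  have cv: "convex_on UNIV \<phi>"
  proof (rule convex_onI)
    fix t u v :: real assume t: "0 < t" "t < 1"
    have "x + ((1 - t) * u + t * v) *\<^sub>R h = (1 - t) *\<^sub>R (x + u *\<^sub>R h) + t *\<^sub>R (x + v *\<^sub>R h)"
      by (simp add: algebra_simps)
    then show "\<phi> ((1 - t) *\<^sub>R u + t *\<^sub>R v) \<le> (1 - t) * \<phi> u + t * \<phi> v"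
      using convex_onD[OF f_convex, of t "x + u *\<^sub>R h" "x + v *\<^sub>R h"] t
      by (simp add: \<phi>_def)
  qed auto
  have d1: "((\<lambda>t. x + t *\<^sub>R h) has_derivative (\<lambda>t. t *\<^sub>R h)) (at 0)"
    by (auto intro!: derivative_eq_intros)
  have "(\<phi> has_derivative (\<lambda>t. gf (x + 0 *\<^sub>R h) \<bullet> (t *\<^sub>R h))) (at 0)"
    unfolding \<phi>_def
    by (rule has_derivative_compose[OF d1, of f]) (use f_grad in auto)
  then have "(\<phi> has_field_derivative (gf x \<bullet> h)) (at 0)"
    by (simp add: has_field_derivative_def mult.commute[of _ "gf x \<bullet> h"])
  then have "\<phi> 1 - \<phi> 0 \<ge> (gf x \<bullet> h) * (1 - 0)"
    by (intro convex_on_imp_above_tangent[OF cv]) auto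
  then show ?thesis by (simp add: \<phi>_def h_def)
qed

lemma DL:
  assumes i: "i < m" and d: "U i d = d"
  shows "f (x + d) \<le> f x + gf x \<bullet> d + L i / 2 * (norm d)\<^sup>2"
proof -
  define \<phi> where "\<phi> t = f (x + t *\<^sub>R d) - t * (gf x \<bullet> d) - L i / 2 * t\<^sup>2 * (norm d)\<^sup>2" for t :: real
  have "\<phi> 0 \<ge> \<phi> 1"
  proof (rule DERIV_nonpos_imp_nonincreasing[where f=\<phi>])
    fix t :: real assume t: "0 \<le> t" "t \<le> 1"
    have d1: "((\<lambda>t. x + t *\<^sub>R d) has_derivative (\<lambda>s. s *\<^sub>R d)) (at t)"
      by (auto intro!: derivative_eq_intros)
    have d2: "((\<lambda>t. f (x + t *\<^sub>R d)) has_derivative (\<lambda>s. gf (x + t *\<^sub>R d) \<bullet> (s *\<^sub>R d))) (at t)"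
      by (rule has_derivative_compose[OF d1, of f]) (use f_grad in auto)
    have "(\<phi> has_real_derivative (gf (x + t *\<^sub>R d) \<bullet> d - gf x \<bullet> d - L i / 2 * (2 * t) * (norm d)\<^sup>2)) (at t)"
    proof -
      have d3: "((\<lambda>t. f (x + t *\<^sub>R d)) has_real_derivative (gf (x + t *\<^sub>R d) \<bullet> d)) (at t)"
        using d2 by (simp add: has_field_derivative_def mult.commute[of _ "gf (x + t *\<^sub>R d) \<bullet> d"])
      have d4: "((\<lambda>t. t * (gf x \<bullet> d)) has_real_derivative (gf x \<bullet> d)) (at t)"
        using DERIV_cmult_right[OF DERIV_ident, of "gf x \<bullet> d"] by simp
      have d5: "((\<lambda>t. L i / 2 * t\<^sup>2 * (norm d)\<^sup>2) has_real_derivative (L i / 2 * (2 * t) * (norm d)\<^sup>2)) (at t)"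
        by (auto intro!: derivative_eq_intros)
      show ?thesis unfolding \<phi>_def
        by (rule DERIV_diff[OF DERIV_diff[OF d3 d4] d5])
    qed
    moreover have "gf (x + t *\<^sub>R d) \<bullet> d - gf x \<bullet> d - L i / 2 * (2 * t) * (norm d)\<^sup>2 \<le> 0"
    proof -
      have "gf (x + t *\<^sub>R d) \<bullet> d - gf x \<bullet> d = (U i (gf (x + U i (t *\<^sub>R d))) - U i (gf x)) \<bullet> d"
        using d by (metis blockU_inner blockU_scale inner_diff_left)
      also have "\<dots> \<le> norm (U i (gf (x + U i (t *\<^sub>R d))) - U i (gf x)) * norm d"
        by (rule norm_cauchy_schwarz)
      also have "\<dots> \<le> L i * norm (U i (t *\<^sub>R d)) * norm d"
        using Lip_i i by (intro mult_right_mono) auto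
      also have "\<dots> = L i * t * (norm d)\<^sup>2"
        using d t by (simp add: blockU_scale power2_eq_square)
      finally show ?thesis by simp
    qed
    ultimately show "\<exists>y. (\<phi> has_real_derivative y) (at t) \<and> y \<le> 0" by blast
  qed simp
  then show ?thesis by (simp add: \<phi>_def)
qed

end


context rpd begin

definition res :: "real^'n \<Rightarrow> real^'q" where "res x = A *v x - b"
definition cvec where "cvec i x lam = U i (gf x - transpose A *v (lam - \<beta> *\<^sub>R res x))"
definition obj where "obj i x lam v = ereal (cvec i x lam \<bullet> v) + g i v
   + ereal (1/2 * ((v - U i x) \<bullet> (P i *v (v - U i x))))"
definition GS where "GS x lam i x' \<longleftrightarrow> (\<forall>j. blk j \<noteq> i \<longrightarrow> x' $ j = x $ j)
   \<and> (\<forall>z. U i z = z \<longrightarrow> obj i x lam (U i x') \<le> obj i x lam z)"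

lemma g_notminf: "i < m \<Longrightarrow> g i v \<noteq> -\<infinity>"
  using g_proper by (auto simp: ereal_proper_def)

lemma g_U: "i < m \<Longrightarrow> g i (U i z) = g i z"
  using g_block by metis

lemma g_dom: "i < m \<Longrightarrow> \<exists>z0. U i z0 = z0 \<and> g i z0 \<noteq> \<infinity>"
  using g_proper g_U by (auto simp: ereal_proper_def) (metis blockU_idem)

lemma quad_expand:
  assumes i: "i < m"
  shows "(a + t *\<^sub>R h) \<bullet> (P i *v (a + t *\<^sub>R h)) = a \<bullet> (P i *v a) + 2 * t * (h \<bullet> (P i *v a)) + t\<^sup>2 * (h \<bullet> (P i *v h))"
proof -
  have s: "a \<bullet> (P i *v h) = h \<bullet> (P i *v a)" using P_symm i by blast
  show ?thesis
    by (simp add: matrix_vector_right_distrib matrix_vector_mult_scaleR inner_add_left inner_add_right s power2_eq_square algebra_simps)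
qed

lemma GS_fin: assumes i: "i < m" and gs: "GS x lam i x'" shows "g i x' \<noteq> \<infinity>"
proof
  assume inf: "g i x' = \<infinity>"
  obtain z0 where z0: "U i z0 = z0" "g i z0 \<noteq> \<infinity>" using g_dom i by blast
  have "obj i x lam (U i x') \<le> obj i x lam z0" using gs z0 by (auto simp: GS_def)
  moreover have "obj i x lam (U i x') = \<infinity>" using inf g_U[OF i] by (simp add: obj_def)
  moreover have "obj i x lam z0 \<noteq> \<infinity>" using z0 g_notminf[OF i] by (simp add: obj_def)
  ultimately show False by simp
qed

lemma FO:
  assumes i: "i < m" and gs: "GS x lam i x'" and z: "U i z = z" and gz: "g i z \<noteq> \<infinity>"
  shows "real_of_ereal (g i x') - real_of_ereal (g i z)
     \<le> cvec i x lam \<bullet> (z - U i x') + (z - U i x') \<bullet> (P i *v (U i x' - U i x))"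
proof -
  define v where "v = U i x'"
  define w where "w = U i x"
  define c where "c = cvec i x lam"
  define G0 where "G0 = real_of_ereal (g i v)"
  define G1 where "G1 = real_of_ereal (g i z)"
  define h where "h = z - v"
  define H where "H = h \<bullet> (P i *v h)"
  define S where "S = c \<bullet> h + G1 - G0 + h \<bullet> (P i *v (v - w))"
  have gv: "g i v = ereal G0" using GS_fin[OF i gs] g_notminf[OF i] g_U[OF i]
    by (cases "g i v") (auto simp: G0_def v_def)
  have gz': "g i z = ereal G1" using gz g_notminf[OF i] by (cases "g i z") (auto simp: G1_def)
  have Hnn: "H \<ge> 0" using P_psd i by (simp add: H_def)
  have Uv: "U i v = v" by (simp add: v_def)
  have key: "0 \<le> S + t / 2 * H" if t: "0 < t" "t \<le> 1" for t
  proof -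
    define zt where "zt = (1 - t) *\<^sub>R v + t *\<^sub>R z"
    have Uzt: "U i zt = zt" using Uv z by (simp add: zt_def blockU_add blockU_scale)
    have "obj i x lam v \<le> obj i x lam zt" using gs Uzt by (auto simp: GS_def v_def)
    moreover have "g i zt \<le> ereal ((1 - t) * G0 + t * G1)"
    proof -
      have "g i zt \<le> ereal (1 - t) * g i v + ereal t * g i z"
        using g_convex i t by (auto simp: ereal_convex_def zt_def)
      then show ?thesis using gv gz' by simp
    qed
    moreover have "obj i x lam zt \<le> ereal (c \<bullet> zt) + ereal ((1 - t) * G0 + t * G1) + ereal (1/2 * ((zt - w) \<bullet> (P i *v (zt - w))))"
      unfolding obj_def c_def[symmetric] w_def[symmetric]
      by (intro add_mono order_refl) fact
    moreover have "obj i x lam v = ereal (c \<bullet> v) + ereal G0 + ereal (1/2 * ((v - w) \<bullet> (P i *v (v - w))))"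
      unfolding obj_def c_def[symmetric] w_def[symmetric] gv ..
    ultimately have "ereal (c \<bullet> v) + ereal G0 + ereal (1/2 * ((v - w) \<bullet> (P i *v (v - w))))
       \<le> ereal (c \<bullet> zt) + ereal ((1 - t) * G0 + t * G1) + ereal (1/2 * ((zt - w) \<bullet> (P i *v (zt - w))))"
      by order
    then have ineq: "c \<bullet> v + G0 + 1/2 * ((v - w) \<bullet> (P i *v (v - w)))
       \<le> c \<bullet> zt + ((1 - t) * G0 + t * G1) + 1/2 * ((zt - w) \<bullet> (P i *v (zt - w)))"
      by simp
    have zw: "zt - w = (v - w) + t *\<^sub>R h" by (simp add: zt_def h_def algebra_simps)
    have q: "(zt - w) \<bullet> (P i *v (zt - w)) = (v - w) \<bullet> (P i *v (v - w)) + 2 * t * (h \<bullet> (P i *v (v - w))) + t\<^sup>2 * H"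
      unfolding zw H_def by (rule quad_expand[OF i])
    have cz: "c \<bullet> zt = c \<bullet> v + t * (c \<bullet> h)"
      by (simp add: zt_def h_def inner_add_right inner_diff_right algebra_simps)
    from ineq q cz have "0 \<le> t * S + t\<^sup>2 / 2 * H"
      by (simp add: S_def algebra_simps)
    then have "0 \<le> t * (S + t / 2 * H)" by (simp add: algebra_simps power2_eq_square)
    then show ?thesis using t by (simp add: zero_le_mult_iff)
  qed
  have "S \<ge> 0"
  proof (rule ccontr)
    assume "\<not> S \<ge> 0"
    then have Sn: "S < 0" by simp
    define t where "t = min 1 (- S / (H + 1))"
    have t0: "0 < t" "t \<le> 1" using Sn Hnn by (auto simp: t_def divide_neg_pos)
    have "t * H \<le> (- S / (H + 1)) * H" using Hnn by (intro mult_right_mono) (auto simp: t_def)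
    also have "\<dots> < - S" using Sn Hnn by (simp add: field_simps)
    finally have tH: "t * H < - S" .
    have "0 \<le> t * H" using Hnn t0 by simp
    with tH have "t / 2 * H < - S" by simp
    with key[OF t0] show False by simp
  qed
  then show ?thesis
    by (simp add: S_def G0_def G1_def h_def v_def w_def c_def g_U[OF i])
qed

lemma GS_unique:
  assumes i: "i < m" and g1: "GS x lam i x1" and g2: "GS x lam i x2"
  shows "x1 = x2"
proof -
  define v1 where "v1 = U i x1"
  define v2 where "v2 = U i x2"
  have f1: "g i v1 \<noteq> \<infinity>" "g i v2 \<noteq> \<infinity>" using GS_fin[OF i g1] GS_fin[OF i g2] g_U[OF i]
    by (auto simp: v1_def v2_def)
  have a: "real_of_ereal (g i x1) - real_of_ereal (g i v2)
     \<le> cvec i x lam \<bullet> (v2 - U i x1) + (v2 - U i x1) \<bullet> (P i *v (U i x1 - U i x))"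
    by (rule FO[OF i g1]) (use f1 in \<open>auto simp: v2_def\<close>)
  have c: "real_of_ereal (g i x2) - real_of_ereal (g i v1)
     \<le> cvec i x lam \<bullet> (v1 - U i x2) + (v1 - U i x2) \<bullet> (P i *v (U i x2 - U i x))"
    by (rule FO[OF i g2]) (use f1 in \<open>auto simp: v1_def\<close>)
  have e1: "g i x1 = g i v1" "g i x2 = g i v2" using g_U[OF i] by (auto simp: v1_def v2_def)
  have sum: "0 \<le> (v2 - v1) \<bullet> (P i *v (v1 - U i x)) + (v1 - v2) \<bullet> (P i *v (v2 - U i x))"
    using a c unfolding e1 v1_def[symmetric] v2_def[symmetric]
    by (simp add: inner_diff_right inner_diff_left)
  have "(v2 - v1) \<bullet> (P i *v (v1 - U i x)) + (v1 - v2) \<bullet> (P i *v (v2 - U i x))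
      = - ((v1 - v2) \<bullet> (P i *v (v1 - v2)))"
    by (simp add: matrix_vector_mult_diff_distrib inner_diff_left inner_diff_right algebra_simps)
  with sum have le: "(v1 - v2) \<bullet> (P i *v (v1 - v2)) \<le> 0" by simp
  have Ud: "U i (v1 - v2) = v1 - v2" by (simp add: v1_def v2_def blockU_diff)
  have "L i * ((v1 - v2) \<bullet> (v1 - v2)) \<le> (v1 - v2) \<bullet> (P i *v (v1 - v2))"
    using P_ge i Ud by (smt (verit) zero_le_power2 mult_nonneg_nonneg beta_pos)
  with le L_pos i have "(v1 - v2) \<bullet> (v1 - v2) \<le> 0"
    by (smt (verit) mult_pos_pos inner_ge_zero)
  then have "v1 - v2 = 0" by (metis inner_eq_zero_iff order_antisym inner_ge_zero)
  then have "v1 = v2" by simp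
  then show ?thesis using g1 g2
    by (auto simp: GS_def vec_eq_iff v1_def v2_def) (metis blockU_nth)
qed

end


lemma mv_sum: "(M::real^'a^'b) *v (\<Sum>i\<in>S. h i) = (\<Sum>i\<in>S. M *v h i)"
  by (induction S rule: infinite_finite_induct) (simp_all add: matrix_vector_right_distrib)

lemma alg_id:
  fixes u r t :: "'a::real_inner"
  assumes h1: "1 - 2*aa*\<rho> - bb = 0" and h2: "-\<beta>/2 + \<kappa> + aa*\<rho>\<^sup>2 + bb*\<rho> = 0"
  shows "(u - \<beta> *\<^sub>R r) \<bullet> (t - r) - \<beta>/2 * (norm (t - r))\<^sup>2 + \<kappa> * (norm t)\<^sup>2
        + aa * (norm (u - \<rho> *\<^sub>R t))\<^sup>2 - bb * ((u - \<rho> *\<^sub>R t) \<bullet> t)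
       = - (u \<bullet> r) + \<beta>/2 * (norm r)\<^sup>2 + aa * (norm u)\<^sup>2"
proof -
  have "(u - \<beta> *\<^sub>R r) \<bullet> (t - r) - \<beta>/2 * (norm (t - r))\<^sup>2 + \<kappa> * (norm t)\<^sup>2
        + aa * (norm (u - \<rho> *\<^sub>R t))\<^sup>2 - bb * ((u - \<rho> *\<^sub>R t) \<bullet> t)
       - (- (u \<bullet> r) + \<beta>/2 * (norm r)\<^sup>2 + aa * (norm u)\<^sup>2)
     = (t \<bullet> u) * (1 - 2*aa*\<rho> - bb) + (t \<bullet> t) * (-\<beta>/2 + \<kappa> + aa*\<rho>\<^sup>2 + bb*\<rho>)"
    unfolding power2_norm_eq_inner
    by (simp add: inner_diff_left inner_diff_right inner_commute[of r t]
        inner_commute[of r u] inner_commute[of u t] algebra_simps power2_eq_square)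
  then show ?thesis using h1 h2 by simp
qed

context rpd begin

definition gr where "gr i x = real_of_ereal (g i x)"
definition Fin where "Fin x \<longleftrightarrow> (\<forall>i<m. g i x \<noteq> \<infinity>)"
definition Fr where "Fr x = f x + (\<Sum>i<m. gr i x)"
definition Qf where "Qf x = (\<Sum>j<m. (U j (x - xs)) \<bullet> (P j *v U j (x - xs)))"
definition dl where "dl x = Fr x - Fr xs - lams \<bullet> res x"

lemma g_real: "i < m \<Longrightarrow> g i x \<noteq> \<infinity> \<Longrightarrow> g i x = ereal (gr i x)"
  using g_notminf by (cases "g i x") (auto simp: gr_def)

lemma objF_Fin: "Fin x \<Longrightarrow> objF m f g x = ereal (Fr x)"
proof -
  assume "Fin x"
  then have "(\<Sum>i<m. g i x) = (\<Sum>i<m. ereal (gr i x))" using g_real by (auto simp: Fin_def)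
  then show ?thesis by (simp add: objF_def Fr_def)
qed

lemma objF_notFin: "\<not> Fin x \<Longrightarrow> objF m f g x = \<infinity>"
  by (auto simp: objF_def Fin_def sum_Pinfty)

lemma Fin_xs: "Fin xs"
proof -
  define zz where "zz j = (SOME z0. U j z0 = z0 \<and> g j z0 \<noteq> \<infinity>)" for j
  have zz: "U j (zz j) = zz j \<and> g j (zz j) \<noteq> \<infinity>" if "j < m" for j
    unfolding zz_def using g_dom[OF that] by (rule someI_ex)
  define zs where "zs = (\<chi> n. zz (blk n) $ n)"
  have "U j zs = U j (zz j)" if "j < m" for j
    by (simp add: vec_eq_iff zs_def)
  then have "Fin zs" using zz g_U by (auto simp: Fin_def) (metis)
  then have "objF m f g zs \<noteq> \<infinity>" by (simp add: objF_Fin)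
  moreover have "objF m f g xs + ereal (lams \<bullet> (A *v zs - b)) \<le> objF m f g zs" using sol_opt by blast
  ultimately have "objF m f g xs \<noteq> \<infinity>" by auto
  then show ?thesis using objF_notFin by blast
qed

lemma dl_nonneg: "Fin x \<Longrightarrow> dl x \<ge> 0"
  using sol_opt[rule_format, of x] objF_Fin[of x] objF_Fin[OF Fin_xs]
  by (simp add: dl_def res_def)

lemma Qf_nonneg: "Qf x \<ge> 0"
  unfolding Qf_def using P_psd by (intro sum_nonneg) auto

lemma GS_other: "GS x lam i x' \<Longrightarrow> j \<noteq> i \<Longrightarrow> U j x' = U j x"
  by (auto simp: GS_def vec_eq_iff)

lemma GS_Ud: "GS x lam i x' \<Longrightarrow> U i (x' - x) = x' - x"
  by (auto simp: GS_def vec_eq_iff)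

lemma GS_Fin: assumes "Fin x" "i < m" "GS x lam i x'" shows "Fin x'"
  using assms GS_fin GS_other g_U unfolding Fin_def by metis

lemma sum_one_diff:
  fixes h1 h2 :: "nat \<Rightarrow> real"
  assumes "i < m" "\<And>j. j < m \<Longrightarrow> j \<noteq> i \<Longrightarrow> h1 j = h2 j"
  shows "(\<Sum>j<m. h1 j) - (\<Sum>j<m. h2 j) = h1 i - h2 i"
proof -
  have "(\<Sum>j<m. h1 j) = h1 i + (\<Sum>j\<in>{..<m}-{i}. h1 j)" using assms(1) by (simp add: sum.remove)
  moreover have "(\<Sum>j<m. h2 j) = h2 i + (\<Sum>j\<in>{..<m}-{i}. h2 j)" using assms(1) by (simp add: sum.remove)
  moreover have "(\<Sum>j\<in>{..<m}-{i}. h1 j) = (\<Sum>j\<in>{..<m}-{i}. h2 j)" using assms by (intro sum.cong) auto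
  ultimately show ?thesis by linarith
qed

lemma mv_neg: "(M::real^'a^'b) *v (- d) = - (M *v d)"
  by (simp add: vec_eq_iff matrix_vector_mult_def sum_negf)

lemma P1:
  assumes fx: "Fin x" and i: "i < m" and gs: "GS x lam i x'"
  shows "Fr x' \<le> Fr x + (gf x \<bullet> U i (xs - x) + gr i xs - gr i x)
     + (lam - \<beta> *\<^sub>R res x) \<bullet> (A *v U i (x - xs)) + (lam - \<beta> *\<^sub>R res x) \<bullet> (res x' - res x)
     + (Qf x - Qf x') / 2 - \<beta> / 2 * (norm (res x' - res x))\<^sup>2"
proof -
  define d where "d = x' - x"
  define w where "w = U i x"
  define v where "v = U i x'"
  define z where "z = U i xs"
  define u' where "u' = lam - \<beta> *\<^sub>R res x"
  have Ud: "U i d = d" using GS_Ud[OF gs] by (simp add: d_def)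
  have dvw: "d = v - w" using Ud by (simp add: d_def v_def w_def blockU_diff)
  have Uz: "U i z = z" by (simp add: z_def)
  have gz: "g i z \<noteq> \<infinity>" using Fin_xs i g_U by (auto simp: Fin_def z_def)
  have desc: "f x' \<le> f x + gf x \<bullet> d + L i / 2 * (norm d)\<^sup>2"
    using DL[OF i Ud, of x] by (simp add: d_def)
  have fo: "gr i x' - gr i xs \<le> cvec i x lam \<bullet> (z - v) + (z - v) \<bullet> (P i *v (v - w))"
    using FO[OF i gs Uz gz] g_U[OF i] by (simp add: gr_def z_def v_def w_def)
  have Fdiff: "Fr x' - Fr x = f x' - f x + (gr i x' - gr i x)"
  proof -
    have "(\<Sum>j<m. gr j x') - (\<Sum>j<m. gr j x) = gr i x' - gr i x"
      by (rule sum_one_diff[OF i]) (metis GS_other[OF gs] g_U gr_def)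
    then show ?thesis by (simp add: Fr_def)
  qed
  have Qdiff: "Qf x - Qf x' = (w - z) \<bullet> (P i *v (w - z)) - (v - z) \<bullet> (P i *v (v - z))"
  proof -
    have "Qf x - Qf x' = U i (x - xs) \<bullet> (P i *v U i (x - xs)) - U i (x' - xs) \<bullet> (P i *v U i (x' - xs))"
      unfolding Qf_def
      by (rule sum_one_diff[OF i]) (simp add: blockU_diff GS_other[OF gs])
    then show ?thesis by (simp add: blockU_diff w_def v_def z_def)
  qed
  have T1: "gf x \<bullet> d + gf x \<bullet> (z - v) = gf x \<bullet> U i (xs - x)"
    by (simp add: dvw blockU_diff w_def z_def inner_diff_right)
  have T2: "cvec i x lam \<bullet> (z - v) = gf x \<bullet> (z - v) - u' \<bullet> (A *v (z - v))"
  proof -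
    have "U i (z - v) = z - v" by (simp add: z_def v_def blockU_diff)
    then have "cvec i x lam \<bullet> (z - v) = (gf x - transpose A *v u') \<bullet> (z - v)"
      unfolding cvec_def u'_def by (metis blockU_inner)
    also have "\<dots> = gf x \<bullet> (z - v) - u' \<bullet> (A *v (z - v))"
      by (simp add: inner_diff_left inner_transpose)
    finally show ?thesis .
  qed
  have rd: "res x' - res x = A *v d" by (simp add: res_def d_def matrix_vector_mult_diff_distrib)
  have T3: "u' \<bullet> (A *v (z - v)) = - (u' \<bullet> (res x' - res x)) - u' \<bullet> (A *v U i (x - xs))"
  proof -
    have "z - v = - d - U i (x - xs)" by (simp add: dvw blockU_diff w_def z_def)
    then show ?thesis
      by (simp add: rd matrix_vector_mult_diff_distrib inner_diff_right mv_neg)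
  qed
  have T4: "(z - v) \<bullet> (P i *v (v - w)) = (Qf x - Qf x') / 2 - d \<bullet> (P i *v d) / 2"
  proof -
    have s1: "w \<bullet> (P i *v v) = v \<bullet> (P i *v w)" "z \<bullet> (P i *v v) = v \<bullet> (P i *v z)"
      "z \<bullet> (P i *v w) = w \<bullet> (P i *v z)" using P_symm[OF i] by blast+
    show ?thesis unfolding Qdiff dvw
      by (simp add: matrix_vector_mult_diff_distrib inner_diff_left inner_diff_right s1 algebra_simps) (simp add: field_simps)
  qed
  have T5: "L i * (d \<bullet> d) + \<beta> * (norm (A *v d))\<^sup>2 \<le> d \<bullet> (P i *v d)"
    using P_ge i Ud by blast
  have nd: "(norm d)\<^sup>2 = d \<bullet> d" by (simp add: power2_norm_eq_inner)
  have desc': "f x' \<le> f x + gf x \<bullet> d + (L i * (d \<bullet> d)) / 2" using desc nd by simp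
  have bn: "\<beta> / 2 * (norm (res x' - res x))\<^sup>2 = (\<beta> * (norm (A *v d))\<^sup>2) / 2" using rd by simp
  have fo': "gr i x' - gr i xs \<le> cvec i x lam \<bullet> z - cvec i x lam \<bullet> v + ((z \<bullet> (P i *v v) - z \<bullet> (P i *v w)) - (v \<bullet> (P i *v v) - v \<bullet> (P i *v w)))"
    using fo by (simp add: inner_diff_left inner_diff_right matrix_vector_mult_diff_distrib)
  have T2': "cvec i x lam \<bullet> z - cvec i x lam \<bullet> v = gf x \<bullet> z - gf x \<bullet> v - u' \<bullet> (A *v (z - v))"
    using T2 by (simp add: inner_diff_right)
  have T1': "gf x \<bullet> d + gf x \<bullet> z - gf x \<bullet> v = gf x \<bullet> U i (xs - x)" using T1 by (simp add: inner_diff_right)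
  have T4': "(z \<bullet> (P i *v v) - z \<bullet> (P i *v w)) - (v \<bullet> (P i *v v) - v \<bullet> (P i *v w)) = (Qf x - Qf x') / 2 - d \<bullet> (P i *v d) / 2"
    using T4 by (simp add: inner_diff_left inner_diff_right matrix_vector_mult_diff_distrib)
  show ?thesis
    unfolding u'_def[symmetric] bn
    using Fdiff desc' fo' T1' T2' T3 T4' T5 by linarith
qed

end


context rpd begin

definition "kp = \<beta>/2 - \<rho> + \<rho>/(2*real m)"
definition "aa = 1/(2*real m*\<rho>)"
definition "bb = 1 - 1/real m"
definition "cc = \<beta>/real m - \<rho> + \<rho>/(2*real m)"

definition V where "V x lam = dl x + Qf x / 2 + kp * (norm (res x))\<^sup>2 + aa * (norm (lam - lams))\<^sup>2
   - bb * ((lam - lams) \<bullet> res x)"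
definition D where "D x = dl x / real m + cc * (norm (res x))\<^sup>2"

lemma mpos: "real m > 0" using m_pos by simp

lemma rho_m: "real m * \<rho> \<le> \<beta>"
proof -
  have "\<rho> * real m \<le> \<beta> / real m * real m" using rho_le mpos by (intro mult_right_mono) auto
  then have "\<rho> * real m \<le> \<beta>" using mpos by simp
  then show ?thesis by (simp add: mult.commute)
qed

lemma cc_pos: "cc > 0"
proof -
  have e: "\<rho> * (2 * real m - 1) = 2 * (real m * \<rho>) - \<rho>" by (simp add: algebra_simps)
  have a: "\<rho> * (2 * real m - 1) < 2 * \<beta>" unfolding e using rho_m rho_pos by linarith
  have "cc = (2 * \<beta> - \<rho> * (2 * real m - 1)) / (2 * real m)"
    using mpos unfolding cc_def by (simp add: field_simps)
  then show ?thesis using a mpos by simp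
qed

lemma h1: "1 - 2*aa*\<rho> - bb = 0"
  using mpos rho_pos unfolding aa_def bb_def by (simp add: field_simps)

lemma h2: "-\<beta>/2 + kp + aa*\<rho>\<^sup>2 + bb*\<rho> = 0"
  using mpos rho_pos unfolding aa_def bb_def kp_def by (simp add: field_simps power2_eq_square)

lemma quad_nonneg: "kp * (norm r)\<^sup>2 + aa * (norm u)\<^sup>2 - bb * (u \<bullet> r) \<ge> 0"
proof -
  define R where "R = norm r"
  define Uu where "Uu = norm u"
  have aap: "aa > 0" using mpos rho_pos by (simp add: aa_def)
  have bbn: "bb \<ge> 0" using mpos m_pos by (simp add: bb_def field_simps)
  have disc: "4 * aa * kp - bb\<^sup>2 \<ge> 0"
  proof -
    have "4 * aa * kp - bb\<^sup>2 = (\<beta> - real m * \<rho>) / (real m * \<rho>)"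
      using mpos rho_pos unfolding aa_def kp_def bb_def by (simp add: field_simps power2_eq_square)
    then show ?thesis using rho_m mpos rho_pos by simp
  qed
  have "u \<bullet> r \<le> Uu * R" unfolding Uu_def R_def by (rule norm_cauchy_schwarz)
  then have "bb * (u \<bullet> r) \<le> bb * (Uu * R)" using bbn by (rule mult_left_mono)
  moreover have "4 * aa * (kp * R\<^sup>2 + aa * Uu\<^sup>2 - bb * (Uu * R)) = (2 * aa * Uu - bb * R)\<^sup>2 + (4 * aa * kp - bb\<^sup>2) * R\<^sup>2"
    by (simp add: algebra_simps power2_eq_square)
  moreover have "(2 * aa * Uu - bb * R)\<^sup>2 + (4 * aa * kp - bb\<^sup>2) * R\<^sup>2 \<ge> 0"
    using disc by simp
  ultimately have "kp * R\<^sup>2 + aa * Uu\<^sup>2 - bb * (Uu * R) \<ge> 0" using aap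
    by (metis zero_le_mult_iff not_less zero_less_numeral mult_pos_pos)
  with \<open>bb * (u \<bullet> r) \<le> bb * (Uu * R)\<close> show ?thesis unfolding R_def Uu_def by linarith
qed

lemma V_nonneg: "Fin x \<Longrightarrow> V x lam \<ge> 0"
  using dl_nonneg[of x] Qf_nonneg[of x] quad_nonneg[of "res x" "lam - lams"] unfolding V_def by simp

lemma D_nonneg: "Fin x \<Longrightarrow> D x \<ge> 0"
  using dl_nonneg[of x] cc_pos mpos unfolding D_def by simp

lemma P2: "(\<Sum>i<m. gf x \<bullet> U i (xs - x) + gr i xs - gr i x) \<le> Fr xs - Fr x"
proof -
  have "(\<Sum>i<m. gf x \<bullet> U i (xs - x)) = gf x \<bullet> (xs - x)"
    by (simp add: inner_sum_right[symmetric] blockU_sum[OF blk_range])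
  also have "\<dots> \<le> f xs - f x" using CT[of x xs] by simp
  finally show ?thesis by (simp add: sum.distrib sum_subtractf Fr_def)
qed

lemma P3: "(\<Sum>i<m. A *v U i (x - xs)) = res x"
  by (simp add: mv_sum[symmetric] blockU_sum[OF blk_range] res_def matrix_vector_mult_diff_distrib sol_feas)

lemma PI:
  assumes fx: "Fin x" and i: "i < m" and gs: "GS x lam i x'"
  shows "V x' (lam - \<rho> *\<^sub>R res x') \<le> Fr x - Fr xs + Qf x / 2 + (gf x \<bullet> U i (xs - x) + gr i xs - gr i x)
     + (lam - \<beta> *\<^sub>R res x) \<bullet> (A *v U i (x - xs)) - lams \<bullet> res x - (lam - lams) \<bullet> res x
     + \<beta>/2 * (norm (res x))\<^sup>2 + aa * (norm (lam - lams))\<^sup>2"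
proof -
  define u where "u = lam - lams"
  define r where "r = res x"
  define t where "t = res x'"
  have p1: "Fr x' \<le> Fr x + (gf x \<bullet> U i (xs - x) + gr i xs - gr i x)
     + (lam - \<beta> *\<^sub>R r) \<bullet> (A *v U i (x - xs)) + (lam - \<beta> *\<^sub>R r) \<bullet> (t - r)
     + (Qf x - Qf x') / 2 - \<beta> / 2 * (norm (t - r))\<^sup>2"
    using P1[OF fx i gs] by (simp add: t_def r_def)
  note al = alg_id[OF h1 h2, of u r t]
  have e1: "lam - \<rho> *\<^sub>R t - lams = u - \<rho> *\<^sub>R t" by (simp add: u_def algebra_simps)
  have e2: "(lam - \<beta> *\<^sub>R r) \<bullet> (t - r) = (u - \<beta> *\<^sub>R r) \<bullet> (t - r) + lams \<bullet> t - lams \<bullet> r"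
    by (simp add: u_def inner_diff_left inner_diff_right algebra_simps)
  have V': "V x' (lam - \<rho> *\<^sub>R t) = Fr x' - Fr xs - lams \<bullet> t + Qf x' / 2 + kp * (norm t)\<^sup>2
     + aa * (norm (u - \<rho> *\<^sub>R t))\<^sup>2 - bb * ((u - \<rho> *\<^sub>R t) \<bullet> t)"
    unfolding V_def dl_def t_def[symmetric] e1 by simp
  have "V x' (lam - \<rho> *\<^sub>R t) \<le> Fr x - Fr xs + Qf x / 2 + (gf x \<bullet> U i (xs - x) + gr i xs - gr i x)
     + (lam - \<beta> *\<^sub>R r) \<bullet> (A *v U i (x - xs)) - lams \<bullet> r - u \<bullet> r
     + \<beta>/2 * (norm r)\<^sup>2 + aa * (norm u)\<^sup>2"
    unfolding V' using p1 al e2 by argo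
  then show ?thesis by (simp add: t_def r_def u_def)
qed

lemma LY:
  assumes fx: "Fin x" and gs: "\<forall>i<m. GS x lam i (X i)"
  shows "(\<Sum>i<m. V (X i) (lam - \<rho> *\<^sub>R res (X i))) \<le> real m * (V x lam - D x)"
proof -
  define C where "C = Fr x - Fr xs + Qf x / 2 - lams \<bullet> res x - (lam - lams) \<bullet> res x
     + \<beta>/2 * (norm (res x))\<^sup>2 + aa * (norm (lam - lams))\<^sup>2"
  define a where "a i = gf x \<bullet> U i (xs - x) + gr i xs - gr i x" for i
  define e where "e i = (lam - \<beta> *\<^sub>R res x) \<bullet> (A *v U i (x - xs))" for i
  have "(\<Sum>i<m. V (X i) (lam - \<rho> *\<^sub>R res (X i))) \<le> (\<Sum>i<m. C + a i + e i)"
    by (intro sum_mono) (use PI[OF fx] gs in \<open>force simp: C_def a_def e_def\<close>)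
  also have "\<dots> = real m * C + (\<Sum>i<m. a i) + (\<Sum>i<m. e i)" by (simp add: sum.distrib)
  also have "(\<Sum>i<m. e i) = (lam - \<beta> *\<^sub>R res x) \<bullet> res x"
    by (simp add: e_def inner_sum_right[symmetric] P3)
  also have "(\<Sum>i<m. a i) \<le> Fr xs - Fr x" unfolding a_def by (rule P2)
  finally have s: "(\<Sum>i<m. V (X i) (lam - \<rho> *\<^sub>R res (X i))) \<le> real m * C + (Fr xs - Fr x) + (lam - \<beta> *\<^sub>R res x) \<bullet> res x"
    by simp
  have "real m * C + (Fr xs - Fr x) + (lam - \<beta> *\<^sub>R res x) \<bullet> res x = real m * (V x lam - D x)"
    using mpos unfolding C_def V_def D_def dl_def kp_def bb_def cc_def
    by (simp add: field_simps inner_diff_left power2_norm_eq_inner)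
  with s show ?thesis by simp
qed

end


context rpd begin

definition nxt where "nxt x lam i = (THE x'. GS x lam i x')"
definition stp where "stp s i = (nxt (fst s) (snd s) i, snd s - \<rho> *\<^sub>R res (nxt (fst s) (snd s) i))"

primrec run where
  "run s [] = s"
| "run s (i # q) = stp (run s q) i"

definition Seqs :: "nat \<Rightarrow> nat list set" where "Seqs k = {q. set q \<subseteq> {..<m} \<and> length q = k}"
definition Ex where "Ex s k h = (\<Sum>q\<in>Seqs k. h (run s q)) / real m ^ k"

lemma finite_Seqs: "finite (Seqs k)"
  unfolding Seqs_def by (rule finite_lists_length_eq) simp

lemma card_Seqs: "card (Seqs k) = m ^ k"
  unfolding Seqs_def by (subst card_lists_length_eq) simp_all

lemma run_append: "run s (q @ p) = run (run s p) q"
  by (induction q) simp_all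

lemma Seqs_0: "Seqs 0 = {[]}"
  by (auto simp: Seqs_def)

lemma Ex_0: "Ex s 0 h = h s"
  by (simp add: Ex_def Seqs_0)

lemma Ex_Suc: "Ex s (Suc k) h = Ex s k (\<lambda>t. (\<Sum>i<m. h (stp t i)) / real m)"
proof -
  have S: "Seqs (Suc k) = (\<lambda>(xs, n). n # xs) ` (Seqs k \<times> {..<m})"
    unfolding Seqs_def by (rule lists_length_Suc_eq)
  have inj: "inj_on (\<lambda>(xs, n). n # xs) (Seqs k \<times> {..<m})"
    by (auto simp: inj_on_def)
  have "(\<Sum>q\<in>Seqs (Suc k). h (run s q)) = (\<Sum>(q, i)\<in>Seqs k \<times> {..<m}. h (stp (run s q) i))"
    unfolding S by (subst sum.reindex[OF inj]) (simp add: case_prod_unfold)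
  also have "\<dots> = (\<Sum>q\<in>Seqs k. \<Sum>i<m. h (stp (run s q) i))"
    by (rule sum.cartesian_product[symmetric])
  finally show ?thesis using m_pos
    by (simp add: Ex_def sum_divide_distrib[symmetric] field_simps)
qed

lemma Ex_add: "Ex s (a + k) h = Ex s k (\<lambda>t. Ex t a h)"
proof (induction a arbitrary: h)
  case 0
  then show ?case by (simp add: Ex_0)
next
  case (Suc a)
  have "Ex s (Suc a + k) h = Ex s (a + k) (\<lambda>t. (\<Sum>i<m. h (stp t i)) / real m)"
    by (simp add: Ex_Suc)
  also have "\<dots> = Ex s k (\<lambda>t. Ex t a (\<lambda>t. (\<Sum>i<m. h (stp t i)) / real m))" by (rule Suc)
  also have "\<dots> = Ex s k (\<lambda>t. Ex t (Suc a) h)" by (simp add: Ex_Suc)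
  finally show ?case .
qed

lemma Ex_mono: "(\<And>q. q \<in> Seqs k \<Longrightarrow> h1 (run s q) \<le> h2 (run s q)) \<Longrightarrow> Ex s k h1 \<le> Ex s k h2"
  unfolding Ex_def by (intro divide_right_mono sum_mono) auto

lemma Ex_diff: "Ex s k (\<lambda>t. h1 t - h2 t) = Ex s k h1 - Ex s k h2"
  unfolding Ex_def by (simp add: sum_subtractf diff_divide_distrib)

lemma Ex_cmult: "Ex s k (\<lambda>t. c * h t) = c * Ex s k h"
  unfolding Ex_def by (simp add: sum_distrib_left)

lemma Ex_nonneg: "(\<And>q. q \<in> Seqs k \<Longrightarrow> 0 \<le> h (run s q)) \<Longrightarrow> 0 \<le> Ex s k h"
  unfolding Ex_def by (intro divide_nonneg_nonneg sum_nonneg) auto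

lemma Ex_le1: "(\<And>q. q \<in> Seqs k \<Longrightarrow> h (run s q) \<le> 1) \<Longrightarrow> Ex s k h \<le> 1"
proof -
  assume a: "\<And>q. q \<in> Seqs k \<Longrightarrow> h (run s q) \<le> 1"
  have "(\<Sum>q\<in>Seqs k. h (run s q)) \<le> (\<Sum>q\<in>Seqs k. 1)" by (rule sum_mono) (rule a)
  also have "\<dots> = real m ^ k" by (simp add: card_Seqs)
  finally show ?thesis using m_pos unfolding Ex_def by simp
qed

end

locale rpd_run = rpd m blk f gf g A b L \<beta> \<rho> P xs lams
  for m and blk :: "'n::finite \<Rightarrow> nat" and f gf g and A :: "real^'n^'q::finite" and b L \<beta> \<rho> P xs lams +
  fixes st0 :: "(real^'n) \<times> (real^'q)"
  assumes HGS: "\<forall>q. set q \<subseteq> {..<m} \<longrightarrow> (\<forall>i<m. GS (fst (run st0 q)) (snd (run st0 q)) i (fst (run st0 (i # q))))"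
begin

definition Vs where "Vs t = V (fst t) (snd t)"
definition Ds where "Ds t = D (fst t)"

lemma Fin_run: "set p \<subseteq> {..<m} \<Longrightarrow> Fin (fst (run st0 p)) \<Longrightarrow> set q \<subseteq> {..<m} \<Longrightarrow> Fin (fst (run st0 (q @ p)))"
proof (induction q)
  case Nil then show ?case by simp
next
  case (Cons i q)
  then have "Fin (fst (run st0 (q @ p)))" "i < m" "set (q @ p) \<subseteq> {..<m}" by auto
  with HGS show ?case using GS_Fin by (metis append_Cons)
qed

lemma hit: "set s \<subseteq> {..<m} \<Longrightarrow> j \<in> set s \<Longrightarrow> g j (fst (run st0 s)) \<noteq> \<infinity>"
proof (induction s)
  case Nil then show ?case by simp
next
  case (Cons i s)
  have i: "i < m" and s: "set s \<subseteq> {..<m}" using Cons.prems by auto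
  have gs: "GS (fst (run st0 s)) (snd (run st0 s)) i (fst (run st0 (i # s)))" using HGS i s by blast
  show ?case
  proof (cases "j = i")
    case True then show ?thesis using GS_fin[OF i gs] by simp
  next
    case False
    then have "j \<in> set s" using Cons.prems by simp
    then have "g j (fst (run st0 s)) \<noteq> \<infinity>" using Cons.IH s by blast
    moreover have "j < m" using Cons.prems by auto
    ultimately show ?thesis using GS_other[OF gs False] g_U by metis
  qed
qed

lemma step_ineq:
  assumes q: "set q \<subseteq> {..<m}" and fin: "Fin (fst (run st0 q))"
  shows "(\<Sum>i<m. Vs (stp (run st0 q) i)) / real m \<le> Vs (run st0 q) - Ds (run st0 q)"
proof -
  define t where "t = run st0 q"
  have gs: "\<forall>i<m. GS (fst t) (snd t) i (fst (stp t i))" using HGS q by (simp add: t_def)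
  have "\<forall>i<m. snd (stp t i) = snd t - \<rho> *\<^sub>R res (fst (stp t i))" by (simp add: stp_def)
  then have "(\<Sum>i<m. Vs (stp t i)) = (\<Sum>i<m. V (fst (stp t i)) (snd t - \<rho> *\<^sub>R res (fst (stp t i))))"
    by (simp add: Vs_def)
  also have "\<dots> \<le> real m * (V (fst t) (snd t) - D (fst t))"
    by (rule LY) (use fin gs in \<open>simp_all add: t_def\<close>)
  finally show ?thesis using mpos unfolding t_def Vs_def Ds_def by (simp add: field_simps)
qed

lemma lyap_sum:
  assumes p: "set p \<subseteq> {..<m}" and fin: "Fin (fst (run st0 p))"
  shows "Ex (run st0 p) K Vs + (\<Sum>k<K. Ex (run st0 p) k Ds) \<le> Vs (run st0 p)"
proof (induction K)
  case 0 then show ?case by (simp add: Ex_0)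
next
  case (Suc K)
  have reach: "q \<in> Seqs k \<Longrightarrow> run (run st0 p) q = run st0 (q @ p) \<and> set (q @ p) \<subseteq> {..<m} \<and> Fin (fst (run st0 (q @ p)))" for q k
    using Fin_run[OF p fin, of q] p by (auto simp: Seqs_def run_append)
  have "Ex (run st0 p) (Suc K) Vs = Ex (run st0 p) K (\<lambda>t. (\<Sum>i<m. Vs (stp t i)) / real m)"
    by (rule Ex_Suc)
  also have "\<dots> \<le> Ex (run st0 p) K (\<lambda>t. Vs t - Ds t)"
    by (rule Ex_mono) (use reach step_ineq in metis)
  also have "\<dots> = Ex (run st0 p) K Vs - Ex (run st0 p) K Ds" by (rule Ex_diff)
  finally show ?case using Suc.IH by simp
qed

lemma Ds_nonneg_run: "set p \<subseteq> {..<m} \<Longrightarrow> Fin (fst (run st0 p)) \<Longrightarrow> 0 \<le> Ex (run st0 p) k Ds"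
  by (rule Ex_nonneg) (metis D_nonneg Ds_def Fin_run Seqs_def mem_Collect_eq run_append)

lemma Vs_nonneg_run: "set p \<subseteq> {..<m} \<Longrightarrow> Fin (fst (run st0 p)) \<Longrightarrow> 0 \<le> Ex (run st0 p) k Vs"
  by (rule Ex_nonneg) (metis V_nonneg Vs_def Fin_run Seqs_def mem_Collect_eq run_append)

lemma Ds_lim:
  assumes p: "set p \<subseteq> {..<m}" and fin: "Fin (fst (run st0 p))"
  shows "(\<lambda>k. Ex (run st0 p) k Ds) \<longlonglongrightarrow> 0"
proof -
  have "summable (\<lambda>k. Ex (run st0 p) k Ds)"
  proof (rule summableI_nonneg_bounded)
    show "0 \<le> Ex (run st0 p) k Ds" for k by (rule Ds_nonneg_run[OF p fin])
    show "(\<Sum>k<K. Ex (run st0 p) k Ds) \<le> Vs (run st0 p)" for K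
      using lyap_sum[OF p fin, of K] Vs_nonneg_run[OF p fin, of K] by linarith
  qed
  then show ?thesis by (rule summable_LIMSEQ_zero)
qed

end


context rpd_run begin

definition ind where "ind B t = (if B (fst t) then 1 else (0::real))"

lemma ind_lim_fin:
  assumes p: "set p \<subseteq> {..<m}" and fin: "Fin (fst (run st0 p))" and Kc: "Kc \<ge> 0"
    and BD: "\<forall>x. Fin x \<longrightarrow> B x \<longrightarrow> 1 \<le> Kc * D x"
  shows "(\<lambda>n. Ex (run st0 p) n (ind B)) \<longlonglongrightarrow> 0"
proof (rule tendsto_sandwich[where f = "\<lambda>_. 0" and h = "\<lambda>n. Kc * Ex (run st0 p) n Ds"])
  have reach: "q \<in> Seqs n \<Longrightarrow> Fin (fst (run (run st0 p) q))" for q n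
    using Fin_run[OF p fin, of q] by (auto simp: Seqs_def run_append)
  show "\<forall>\<^sub>F n in sequentially. 0 \<le> Ex (run st0 p) n (ind B)"
    by (intro always_eventually allI Ex_nonneg) (simp add: ind_def)
  show "\<forall>\<^sub>F n in sequentially. Ex (run st0 p) n (ind B) \<le> Kc * Ex (run st0 p) n Ds"
  proof (intro always_eventually allI)
    fix n
    have "Ex (run st0 p) n (ind B) \<le> Ex (run st0 p) n (\<lambda>t. Kc * Ds t)"
    proof (rule Ex_mono)
      fix q assume "q \<in> Seqs n"
      then have "Fin (fst (run (run st0 p) q))" by (rule reach)
      then show "ind B (run (run st0 p) q) \<le> Kc * Ds (run (run st0 p) q)"
        using BD Kc D_nonneg by (auto simp: ind_def Ds_def)
    qed
    then show "Ex (run st0 p) n (ind B) \<le> Kc * Ex (run st0 p) n Ds" by (simp add: Ex_cmult)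
  qed
  show "(\<lambda>n. Kc * Ex (run st0 p) n Ds) \<longlonglongrightarrow> 0"
    using tendsto_mult_right_zero[OF Ds_lim[OF p fin], of Kc] by (simp add: mult.commute)
qed simp

lemma card_bad: "card {q \<in> Seqs K. \<not> {..<m} \<subseteq> set q} \<le> m * (m - 1) ^ K"
proof -
  have sub: "{q \<in> Seqs K. \<not> {..<m} \<subseteq> set q} \<subseteq> (\<Union>j<m. {q. set q \<subseteq> {..<m} - {j} \<and> length q = K})"
    by (auto simp: Seqs_def)
  have "card {q \<in> Seqs K. \<not> {..<m} \<subseteq> set q} \<le> card (\<Union>j<m. {q. set q \<subseteq> {..<m} - {j} \<and> length q = K})"
    by (rule card_mono[OF _ sub]) (auto intro: finite_lists_length_eq)
  also have "\<dots> \<le> (\<Sum>j<m. card {q. set q \<subseteq> {..<m} - {j} \<and> length q = K})"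
    by (rule card_UN_le) simp
  also have "\<dots> = (\<Sum>j<m. (m - 1) ^ K)"
    by (intro sum.cong refl) (simp add: card_lists_length_eq)
  finally show ?thesis by simp
qed

lemma ind_lim:
  assumes Kc: "Kc \<ge> 0" and BD: "\<forall>x. Fin x \<longrightarrow> B x \<longrightarrow> 1 \<le> Kc * D x"
  shows "(\<lambda>n. Ex st0 n (ind B)) \<longlonglongrightarrow> 0"
proof (rule LIMSEQ_I)
  fix r :: real assume r: "0 < r"
  have mp: "real m > 0" by (rule mpos)
  have "(\<lambda>K. real m * ((real m - 1) / real m) ^ K) \<longlonglongrightarrow> real m * 0"
    by (intro tendsto_mult tendsto_const LIMSEQ_power_zero) (use mp in \<open>simp add: field_simps\<close>)
  then have "\<forall>\<^sub>F K in sequentially. real m * ((real m - 1) / real m) ^ K < r / 2"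
    using r by (intro order_tendstoD(2)) auto
  then obtain K0 where K0: "real m * ((real m - 1) / real m) ^ K0 < r / 2"
    by (auto simp: eventually_sequentially)
  define G where "G = {q \<in> Seqs K0. {..<m} \<subseteq> set q}"
  define Bd where "Bd = {q \<in> Seqs K0. \<not> {..<m} \<subseteq> set q}"
  have finG: "finite G" using finite_Seqs by (simp add: G_def)
  have finBd: "finite Bd" using finite_Seqs by (simp add: Bd_def)
  have GB: "Seqs K0 = G \<union> Bd" "G \<inter> Bd = {}" by (auto simp: G_def Bd_def)
  have Gfin: "set p \<subseteq> {..<m} \<and> Fin (fst (run st0 p))" if "p \<in> G" for p
    using that hit by (auto simp: G_def Seqs_def Fin_def)
  have "(\<lambda>n. \<Sum>p\<in>G. Ex (run st0 p) n (ind B)) \<longlonglongrightarrow> 0"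
    by (rule tendsto_null_sum) (use Gfin ind_lim_fin[OF _ _ Kc BD] in blast)
  then have "(\<lambda>n. (\<Sum>p\<in>G. Ex (run st0 p) n (ind B)) / real m ^ K0) \<longlonglongrightarrow> 0 / real m ^ K0"
    by (intro tendsto_divide tendsto_const) (use mp in auto)
  then have "\<forall>\<^sub>F n in sequentially. (\<Sum>p\<in>G. Ex (run st0 p) n (ind B)) / real m ^ K0 < r / 2"
    using r by (intro order_tendstoD(2)) auto
  then obtain N where N: "\<And>n. n \<ge> N \<Longrightarrow> (\<Sum>p\<in>G. Ex (run st0 p) n (ind B)) / real m ^ K0 < r / 2"
    by (auto simp: eventually_sequentially)
  have cardBd: "real (card Bd) / real m ^ K0 \<le> real m * ((real m - 1) / real m) ^ K0"
  proof -
    have e: "real (m - 1) = real m - 1" using m_pos by (simp add: of_nat_diff)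
    have "real (card Bd) \<le> real (m * (m - 1) ^ K0)"
      unfolding of_nat_le_iff Bd_def by (rule card_bad)
    then have "real (card Bd) \<le> real m * (real m - 1) ^ K0"
      by (simp only: of_nat_mult of_nat_power e)
    then show ?thesis using mp by (simp add: power_divide divide_right_mono)
  qed
  show "\<exists>no. \<forall>n\<ge>no. norm (Ex st0 n (ind B) - 0) < r"
  proof (intro exI allI impI)
    fix n assume n: "n \<ge> N + K0"
    define n' where "n' = n - K0"
    have nn: "n = n' + K0" "n' \<ge> N" using n by (auto simp: n'_def)
    have le1: "Ex (run st0 p) n' (ind B) \<le> 1" for p by (rule Ex_le1) (simp add: ind_def)
    have nn1: "0 \<le> Ex (run st0 p) n' (ind B)" for p by (rule Ex_nonneg) (simp add: ind_def)
    have "Ex st0 n (ind B) = Ex st0 K0 (\<lambda>t. Ex t n' (ind B))" unfolding nn by (rule Ex_add)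
    also have "\<dots> = (\<Sum>p\<in>Seqs K0. Ex (run st0 p) n' (ind B)) / real m ^ K0" by (simp add: Ex_def)
    also have "(\<Sum>p\<in>Seqs K0. Ex (run st0 p) n' (ind B)) = (\<Sum>p\<in>G. Ex (run st0 p) n' (ind B)) + (\<Sum>p\<in>Bd. Ex (run st0 p) n' (ind B))"
      unfolding GB(1) by (rule sum.union_disjoint[OF finG finBd GB(2)])
    also have "(\<Sum>p\<in>Bd. Ex (run st0 p) n' (ind B)) \<le> real (card Bd)"
      using sum_mono[of Bd "\<lambda>p. Ex (run st0 p) n' (ind B)" "\<lambda>_. 1"] le1 by simp
    finally have "Ex st0 n (ind B) \<le> (\<Sum>p\<in>G. Ex (run st0 p) n' (ind B)) / real m ^ K0 + real (card Bd) / real m ^ K0"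
      using mp by (simp add: divide_right_mono add_divide_distrib)
    also have "\<dots> < r / 2 + r / 2" using N[OF nn(2)] cardBd K0 by linarith
    finally have up: "Ex st0 n (ind B) < r" by simp
    have "0 \<le> Ex st0 n (ind B)" by (rule Ex_nonneg) (simp add: ind_def)
    with up show "norm (Ex st0 n (ind B) - 0) < r" by simp
  qed
qed

end


context rpd begin

lemma BD_R:
  assumes e: "\<epsilon> > 0"
  shows "\<forall>x. Fin x \<longrightarrow> \<epsilon> < norm (res x) \<longrightarrow> 1 \<le> (1 / (cc * \<epsilon>\<^sup>2)) * D x"
proof (intro allI impI)
  fix x assume fx: "Fin x" and lt: "\<epsilon> < norm (res x)"
  have ccp: "cc > 0" by (rule cc_pos)
  have "\<epsilon>\<^sup>2 < (norm (res x))\<^sup>2" using lt e by (simp add: power_strict_mono)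
  then have "cc * \<epsilon>\<^sup>2 < cc * (norm (res x))\<^sup>2" using ccp by simp
  also have "\<dots> \<le> D x" using dl_nonneg[OF fx] mpos unfolding D_def by simp
  finally have "cc * \<epsilon>\<^sup>2 < D x" .
  then show "1 \<le> (1 / (cc * \<epsilon>\<^sup>2)) * D x" using ccp e by (simp add: field_simps)
qed

lemma BD_F:
  assumes e: "\<epsilon> > 0"
  shows "\<forall>x. Fin x \<longrightarrow> ereal \<epsilon> < \<bar>objF m f g x - objF m f g xs\<bar> \<longrightarrow>
     1 \<le> (2 * real m / \<epsilon> + 1 / (cc * (\<epsilon> / (2 * (norm lams + 1)))\<^sup>2)) * D x"
proof (intro allI impI)
  fix x assume fx: "Fin x" and lt: "ereal \<epsilon> < \<bar>objF m f g x - objF m f g xs\<bar>"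
  have ccp: "cc > 0" by (rule cc_pos)
  define \<theta> where "\<theta> = \<epsilon> / (2 * (norm lams + 1))"
  have np: "2 * (norm lams + 1) > 0" by (smt (verit) norm_ge_zero)
  have thp: "\<theta> > 0" using e np unfolding \<theta>_def by (rule divide_pos_pos)
  define K1 where "K1 = 2 * real m / \<epsilon>"
  define K2 where "K2 = 1 / (cc * \<theta>\<^sup>2)"
  have K1p: "K1 \<ge> 0" using e by (simp add: K1_def)
  have K2p: "K2 \<ge> 0" using ccp by (simp add: K2_def)
  have dn: "dl x \<ge> 0" by (rule dl_nonneg[OF fx])
  have lt': "\<epsilon> < \<bar>Fr x - Fr xs\<bar>" using lt objF_Fin[OF fx] objF_Fin[OF Fin_xs] by simp
  have eq: "Fr x - Fr xs = dl x + lams \<bullet> res x" by (simp add: dl_def)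
  have Dn1: "D x \<ge> dl x / real m" using ccp unfolding D_def by simp
  have Dn2: "D x \<ge> cc * (norm (res x))\<^sup>2" using dn mpos unfolding D_def by simp
  have "1 \<le> K1 * D x \<or> 1 \<le> K2 * D x"
  proof (cases "dl x > \<epsilon> / 2")
    case True
    have "K1 * D x \<ge> K1 * (dl x / real m)" using Dn1 K1p by (rule mult_left_mono)
    moreover have "K1 * (dl x / real m) = 2 * dl x / \<epsilon>" using mpos by (simp add: K1_def)
    moreover have "2 * dl x / \<epsilon> > 1" using True e by (simp add: field_simps)
    ultimately show ?thesis by simp
  next
    case False
    have "\<bar>lams \<bullet> res x\<bar> > \<epsilon> / 2" using lt' eq False dn by linarith
    moreover have "\<bar>lams \<bullet> res x\<bar> \<le> norm lams * norm (res x)" by (rule Cauchy_Schwarz_ineq2)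
    ultimately have "norm lams * norm (res x) > \<epsilon> / 2" by simp
    moreover have "(norm lams + 1) * norm (res x) = norm lams * norm (res x) + norm (res x)"
      by (simp add: distrib_right)
    ultimately have h: "(norm lams + 1) * norm (res x) > \<epsilon> / 2" using norm_ge_zero[of "res x"] by linarith
    have "norm (res x) * (2 * (norm lams + 1)) = 2 * ((norm lams + 1) * norm (res x))" by (simp add: algebra_simps)
    then have "\<epsilon> < norm (res x) * (2 * (norm lams + 1))" using h by linarith
    then have Rt: "norm (res x) > \<theta>" unfolding \<theta>_def using pos_divide_less_eq[OF np] by blast
    then have "\<theta>\<^sup>2 < (norm (res x))\<^sup>2" using thp by (simp add: power_strict_mono)
    then have "cc * \<theta>\<^sup>2 < cc * (norm (res x))\<^sup>2" using ccp by simp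
    then have "cc * \<theta>\<^sup>2 < D x" using Dn2 by linarith
    then have "1 \<le> K2 * D x" using ccp thp by (simp add: K2_def field_simps)
    then show ?thesis by simp
  qed
  moreover have "0 \<le> K1 * D x" "0 \<le> K2 * D x" using K1p K2p D_nonneg[OF fx] by simp_all
  ultimately have "1 \<le> K1 * D x + K2 * D x" by linarith
  then show "1 \<le> (2 * real m / \<epsilon> + 1 / (cc * (\<epsilon> / (2 * (norm lams + 1)))\<^sup>2)) * D x"
    unfolding K1_def K2_def \<theta>_def by (simp add: distrib_right)
qed

lemma BD_Kc_nonneg: "\<epsilon> > 0 \<Longrightarrow> 0 \<le> 2 * real m / \<epsilon> + 1 / (cc * (\<epsilon> / (2 * (norm lams + 1)))\<^sup>2)"
  using cc_pos by simp

end

definition seqw :: "(nat \<Rightarrow> 'w \<Rightarrow> nat) \<Rightarrow> nat \<Rightarrow> 'w \<Rightarrow> nat list" where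
  "seqw ik k \<omega> = rev (map (\<lambda>j. ik j \<omega>) [0..<k])"

lemma seqw_0 [simp]: "seqw ik 0 \<omega> = []" by (simp add: seqw_def)
lemma seqw_Suc [simp]: "seqw ik (Suc k) \<omega> = ik k \<omega> # seqw ik k \<omega>" by (simp add: seqw_def)
lemma length_seqw [simp]: "length (seqw ik k \<omega>) = k" by (simp add: seqw_def)

lemma seqw_eq: "seqw ik k \<omega> = s \<longleftrightarrow> length s = k \<and> (\<forall>j<k. ik j \<omega> = rev s ! j)"
proof -
  have "seqw ik k \<omega> = s \<longleftrightarrow> map (\<lambda>j. ik j \<omega>) [0..<k] = rev s"
    unfolding seqw_def by (metis rev_rev_ident)
  also have "\<dots> \<longleftrightarrow> length s = k \<and> (\<forall>j<k. ik j \<omega> = rev s ! j)"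
    by (auto simp: list_eq_iff_nth_eq)
  finally show ?thesis .
qed

lemma prob_seqw:
  fixes M :: "'w measure" and ik :: "nat \<Rightarrow> 'w \<Rightarrow> nat"
  assumes M: "prob_space M"
    and meas: "\<forall>k. ik k \<in> measurable M (count_space UNIV)"
    and unif: "\<forall>k. \<forall>i<m. measure M {\<omega>\<in>space M. ik k \<omega> = i} = 1 / real m"
    and indep: "prob_space.indep_vars M (\<lambda>_. count_space UNIV) ik UNIV"
    and s: "set s \<subseteq> {..<m}" "length s = k"
  shows "measure M {\<omega>\<in>space M. seqw ik k \<omega> = s} = (1 / real m) ^ k"
    and "{\<omega>\<in>space M. seqw ik k \<omega> = s} \<in> sets M"
proof -
  interpret prob_space M by (rule M)
  define Aj where "Aj j = ik j -` {rev s ! j} \<inter> space M" for j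
  have Aj_sets: "Aj j \<in> sets M" for j
    unfolding Aj_def using measurable_sets[OF meas[rule_format, of j], of "{rev s ! j}"] by simp
  have Aj_prob: "j < k \<Longrightarrow> prob (Aj j) = 1 / real m" for j
  proof -
    assume j: "j < k"
    then have "rev s ! j \<in> set s" using s by (metis length_rev nth_mem set_rev)
    then have "rev s ! j < m" using s by auto
    moreover have "Aj j = {\<omega>\<in>space M. ik j \<omega> = rev s ! j}" by (auto simp: Aj_def)
    ultimately show ?thesis using unif by simp
  qed
  have "measure M {\<omega>\<in>space M. seqw ik k \<omega> = s} = (1 / real m) ^ k
        \<and> {\<omega>\<in>space M. seqw ik k \<omega> = s} \<in> sets M"
  proof (cases "k = 0")
    case True
    then have "{\<omega>\<in>space M. seqw ik k \<omega> = s} = space M" using s by auto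
    then show ?thesis using True by (simp add: prob_space)
  next
    case False
    have eq: "{\<omega>\<in>space M. seqw ik k \<omega> = s} = (\<Inter>j\<in>{..<k}. Aj j)"
      using False s by (auto simp: seqw_eq Aj_def)
    have ind: "indep_sets (\<lambda>i. {ik i -` A \<inter> space M | A. A \<in> sets (count_space UNIV)}) UNIV"
      using indep unfolding indep_vars_def2 by blast
    have "prob (\<Inter>j\<in>{..<k}. Aj j) = (\<Prod>j\<in>{..<k}. prob (Aj j))"
      by (rule indep_setsD[OF ind]) (use False in \<open>auto simp: Aj_def\<close>)
    also have "\<dots> = (\<Prod>j\<in>{..<k}. 1 / real m)" by (rule prod.cong) (auto simp: Aj_prob)
    finally have "prob (\<Inter>j\<in>{..<k}. Aj j) = (1 / real m) ^ k" by simp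
    moreover have "(\<Inter>j\<in>{..<k}. Aj j) \<in> sets M"
      using False Aj_sets by (intro sets.finite_INT) auto
    ultimately show ?thesis unfolding eq by simp
  qed
  then show "measure M {\<omega>\<in>space M. seqw ik k \<omega> = s} = (1 / real m) ^ k"
    and "{\<omega>\<in>space M. seqw ik k \<omega> = s} \<in> sets M" by auto
qed


theorem mainTheorem6:
  fixes M :: "'w measure"
    and m :: nat
    and blk :: "'n::finite \<Rightarrow> nat"
    and f :: "real^'n \<Rightarrow> real"
    and gf :: "real^'n \<Rightarrow> real^'n"
    and g :: "nat \<Rightarrow> real^'n \<Rightarrow> ereal"
    and A :: "real^'n^'q::finite"
    and b :: "real^'q"
    and L :: "nat \<Rightarrow> real" and Lr :: real
    and \<beta> \<rho> :: real
    and P :: "nat \<Rightarrow> real^'n^'n"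
    and xs :: "real^'n" and lams :: "real^'q"
    and x0 :: "real^'n"
    and ik :: "nat \<Rightarrow> 'w \<Rightarrow> nat"
    and x :: "nat \<Rightarrow> 'w \<Rightarrow> real^'n"
    and r :: "nat \<Rightarrow> 'w \<Rightarrow> real^'q"
    and lam :: "nat \<Rightarrow> 'w \<Rightarrow> real^'q"
  defines "U \<equiv> blockU blk"
  defines "F \<equiv> objF m f g"
  assumes blk_range: "\<forall>j. blk j < m"
    and blocks_nonempty: "\<forall>i<m. \<exists>j. blk j = i"
    (* f convex, continuously differentiable with gradient gf *)
    and f_convex: "convex_on UNIV f"
    and f_grad: "\<forall>z. (f has_derivative (\<lambda>h. gf z \<bullet> h)) (at z)"
    and gf_cont: "continuous_on UNIV gf"
    (* each g_i is a function of the i-th block only; proper, convex, lsc *)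
    and g_block: "\<forall>i<m. \<forall>z. g i z = g i (U i z)"
    and g_proper: "\<forall>i<m. ereal_proper (g i)"
    and g_convex: "\<forall>i<m. ereal_convex (g i)"
    and g_lsc: "\<forall>i<m. ereal_lsc (g i)"
    (* existence of a solution *)
    and sol_feas: "A *v xs = b"
    and sol_opt: "\<forall>z. F xs + ereal (lams \<bullet> (A *v z - b)) \<le> F z"
    (* gradient Lipschitz continuity *)
    and L_pos: "\<forall>i<m. L i > 0"
    and Lip_i: "\<forall>i<m. \<forall>z y. norm (U i (gf (z + U i y)) - U i (gf z)) \<le> L i * norm (U i y)"
    and Lip_r: "\<forall>i<m. \<forall>z y. norm (gf (z + U i y) - gf z) \<le> Lr * norm (U i y)"
    (* parameters *)
    and beta_pos: "\<beta> > 0"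
    and rho_pos: "0 < \<rho>" and rho_le: "\<rho> \<le> \<beta> / real m"
    (* P_i: symmetric PSD matrices acting on block i *)
    and P_block: "\<forall>i<m. \<forall>j l. blk j \<noteq> i \<or> blk l \<noteq> i \<longrightarrow> P i $ j $ l = 0"
    and P_sym: "\<forall>i<m. transpose (P i) = P i"
    and P_psd: "\<forall>i<m. \<forall>y. 0 \<le> y \<bullet> (P i *v y)"
    and P_ge: "\<forall>i<m. \<forall>y. U i y = y \<longrightarrow>
                 L i * (y \<bullet> y) + \<beta> * (norm (A *v y))\<^sup>2 \<le> y \<bullet> (P i *v y)"
    (* random block selection: i.i.d. uniform on {0..<m} *)
    and M_prob: "prob_space M"
    and ik_meas: "\<forall>k. ik k \<in> measurable M (count_space UNIV)"
    and ik_range: "\<forall>k. \<forall>\<omega>\<in>space M. ik k \<omega> < m"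
    and ik_unif: "\<forall>k. \<forall>i<m. measure M {\<omega>\<in>space M. ik k \<omega> = i} = 1 / real m"
    and ik_indep: "prob_space.indep_vars M (\<lambda>_. count_space UNIV) ik UNIV"
    (* Algorithm 1 *)
    and x_init: "\<forall>\<omega>\<in>space M. x 0 \<omega> = x0"
    and lam_init: "\<forall>\<omega>\<in>space M. lam 0 \<omega> = 0"
    and r_init: "\<forall>\<omega>\<in>space M. r 0 \<omega> = A *v x0 - b"
    and x_other: "\<forall>k. \<forall>\<omega>\<in>space M. \<forall>j. blk j \<noteq> ik k \<omega> \<longrightarrow> x (Suc k) \<omega> $ j = x k \<omega> $ j"
    and x_argmin: "\<forall>k. \<forall>\<omega>\<in>space M. \<forall>z. U (ik k \<omega>) z = z \<longrightarrow>
        (let i = ik k \<omega>;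
             c = U i (gf (x k \<omega>) - transpose A *v (lam k \<omega> - \<beta> *\<^sub>R r k \<omega>));
             obj = (\<lambda>v. ereal (c \<bullet> v) + g i v
                        + ereal (1/2 * ((v - U i (x k \<omega>)) \<bullet> (P i *v (v - U i (x k \<omega>))))))
         in obj (U i (x (Suc k) \<omega>)) \<le> obj z)"
    and r_step: "\<forall>k. \<forall>\<omega>\<in>space M.
        r (Suc k) \<omega> = r k \<omega> + A *v (U (ik k \<omega>) (x (Suc k) \<omega> - x k \<omega>))"
    and lam_step: "\<forall>k. \<forall>\<omega>\<in>space M. lam (Suc k) \<omega> = lam k \<omega> - \<rho> *\<^sub>R r (Suc k) \<omega>"
  shows "(\<forall>\<epsilon>>0. (\<lambda>k. measure M {\<omega>\<in>space M. ereal \<epsilon> < \<bar>F (x k \<omega>) - F xs\<bar>}) \<longlonglongrightarrow> 0)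
       \<and> (\<forall>\<epsilon>>0. (\<lambda>k. measure M {\<omega>\<in>space M. \<epsilon> < norm (r k \<omega>)}) \<longlonglongrightarrow> 0)"
proof -
  have rpd: "rpd m blk f gf g A b L \<beta> \<rho> P xs lams"
    unfolding rpd_def using blk_range f_convex f_grad g_block g_proper g_convex sol_feas sol_opt L_pos Lip_i
      beta_pos rho_pos rho_le P_sym P_psd P_ge unfolding U_def F_def by blast
  interpret R: rpd m blk f gf g A b L \<beta> \<rho> P xs lams by (rule rpd)
  interpret PS: prob_space M by (rule M_prob)
  define st0 where "st0 = (x0, 0 :: real^'q)"
  have GSw: "R.GS (x k \<omega>) (lam k \<omega>) (ik k \<omega>) (x (Suc k) \<omega>)"
    if w: "\<omega> \<in> space M" and rk: "r k \<omega> = R.res (x k \<omega>)" for k \<omega>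
    unfolding R.GS_def
  proof (intro conjI allI impI)
    fix j assume "blk j \<noteq> ik k \<omega>"
    then show "x (Suc k) \<omega> $ j = x k \<omega> $ j" using x_other w by blast
  next
    fix z assume "blockU blk (ik k \<omega>) z = z"
    then show "R.obj (ik k \<omega>) (x k \<omega>) (lam k \<omega>) (blockU blk (ik k \<omega>) (x (Suc k) \<omega>))
        \<le> R.obj (ik k \<omega>) (x k \<omega>) (lam k \<omega>) z"
      using mp[OF spec[OF bspec[OF spec[OF x_argmin, of k] w], of z]] unfolding U_def
      by (simp add: Let_def R.obj_def R.cvec_def rk)
  qed
  have K1: "\<forall>\<omega>\<in>space M. r k \<omega> = R.res (x k \<omega>) \<and> (x k \<omega>, lam k \<omega>) = R.run st0 (seqw ik k \<omega>)" for k
  proof (induction k)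
    case 0
    then show ?case using x_init lam_init r_init by (simp add: R.res_def st0_def)
  next
    case (Suc k)
    show ?case
    proof
      fix \<omega> assume w: "\<omega> \<in> space M"
      define i where "i = ik k \<omega>"
      have i: "i < m" using ik_range w by (simp add: i_def)
      have rk: "r k \<omega> = R.res (x k \<omega>)" and st: "(x k \<omega>, lam k \<omega>) = R.run st0 (seqw ik k \<omega>)"
        using Suc w by auto
      have gs: "R.GS (x k \<omega>) (lam k \<omega>) i (x (Suc k) \<omega>)" using GSw[OF w rk] unfolding i_def .
      have nx: "R.nxt (x k \<omega>) (lam k \<omega>) i = x (Suc k) \<omega>"
        unfolding R.nxt_def by (rule the_equality) (fact gs, metis R.GS_unique[OF i gs])
      have rS: "r (Suc k) \<omega> = R.res (x (Suc k) \<omega>)"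
      proof -
        have "r (Suc k) \<omega> = r k \<omega> + A *v (x (Suc k) \<omega> - x k \<omega>)"
          using r_step w R.GS_Ud[OF gs] unfolding U_def i_def by simp
        then show ?thesis using rk by (simp add: R.res_def matrix_vector_mult_diff_distrib)
      qed
      have "R.run st0 (seqw ik (Suc k) \<omega>) = R.stp (x k \<omega>, lam k \<omega>) i"
        using st by (simp add: i_def)
      also have "\<dots> = (x (Suc k) \<omega>, lam (Suc k) \<omega>)"
        using lam_step w rS by (simp add: R.stp_def nx)
      finally show "r (Suc k) \<omega> = R.res (x (Suc k) \<omega>) \<and> (x (Suc k) \<omega>, lam (Suc k) \<omega>) = R.run st0 (seqw ik (Suc k) \<omega>)"
        using rS by simp
    qed
  qed
  have pw: "measure M {\<omega>\<in>space M. seqw ik (length s) \<omega> = s} = (1 / real m) ^ length s"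
    "{\<omega>\<in>space M. seqw ik (length s) \<omega> = s} \<in> sets M"
    if "set s \<subseteq> {..<m}" for s
    using prob_seqw[OF M_prob ik_meas ik_unif ik_indep that refl] by auto
  have real: "\<exists>\<omega>\<in>space M. seqw ik (length s) \<omega> = s" if s: "set s \<subseteq> {..<m}" for s
  proof (rule ccontr)
    assume "\<not> ?thesis"
    then have e0: "{\<omega>\<in>space M. seqw ik (length s) \<omega> = s} = {}" by auto
    have "(1 / real m) ^ length s = measure M {}" using pw(1)[OF s] unfolding e0 by simp
    then have "(1 / real m) ^ length s = 0" by simp
    then show False using R.m_pos by simp
  qed
  have HGS: "\<forall>q. set q \<subseteq> {..<m} \<longrightarrow> (\<forall>i<m. R.GS (fst (R.run st0 q)) (snd (R.run st0 q)) i (fst (R.run st0 (i # q))))"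
  proof (intro allI impI)
    fix q i assume q: "set q \<subseteq> {..<m}" and i: "i < m"
    obtain \<omega> where w: "\<omega> \<in> space M" and sw: "seqw ik (length (i # q)) \<omega> = i # q"
      using real[of "i # q"] q i by auto
    define k where "k = length q"
    have ikw: "ik k \<omega> = i" and sk: "seqw ik k \<omega> = q" using sw by (simp_all add: k_def)
    have a: "r k \<omega> = R.res (x k \<omega>)" "(x k \<omega>, lam k \<omega>) = R.run st0 q" using K1[of k] w sk by auto
    have b: "(x (Suc k) \<omega>, lam (Suc k) \<omega>) = R.run st0 (i # q)" using K1[of "Suc k"] w sw by (auto simp: k_def)
    show "R.GS (fst (R.run st0 q)) (snd (R.run st0 q)) i (fst (R.run st0 (i # q)))"
      using GSw[OF w a(1)] a(2) b ikw by (metis fst_conv snd_conv)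
  qed
  interpret RR: rpd_run m blk f gf g A b L \<beta> \<rho> P xs lams st0
    by (intro rpd_run.intro rpd rpd_run_axioms.intro HGS)
  have meq: "measure M {\<omega>\<in>space M. B (x k \<omega>)} = R.Ex st0 k (RR.ind B)" for B k
  proof -
    define S where "S = {s \<in> R.Seqs k. B (fst (R.run st0 s))}"
    have finS: "finite S" using R.finite_Seqs by (simp add: S_def)
    have sw_in: "seqw ik k \<omega> \<in> R.Seqs k" if "\<omega> \<in> space M" for \<omega>
      using ik_range that by (auto simp: R.Seqs_def seqw_def)
    have "{\<omega>\<in>space M. B (x k \<omega>)} = (\<Union>s\<in>S. {\<omega>\<in>space M. seqw ik k \<omega> = s})"
    proof (intro equalityI subsetI)
      fix \<omega> assume "\<omega> \<in> {\<omega>\<in>space M. B (x k \<omega>)}"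
      then show "\<omega> \<in> (\<Union>s\<in>S. {\<omega>\<in>space M. seqw ik k \<omega> = s})"
        using K1[of k] sw_in by (auto simp: S_def) (metis fst_conv)
    next
      fix \<omega> assume "\<omega> \<in> (\<Union>s\<in>S. {\<omega>\<in>space M. seqw ik k \<omega> = s})"
      then show "\<omega> \<in> {\<omega>\<in>space M. B (x k \<omega>)}"
        using K1[of k] by (auto simp: S_def) (metis fst_conv)
    qed
    then have "measure M {\<omega>\<in>space M. B (x k \<omega>)} = (\<Sum>s\<in>S. measure M {\<omega>\<in>space M. seqw ik k \<omega> = s})"
      using pw(2) finS by (simp only:) (rule PS.finite_measure_finite_Union,
          auto simp: S_def R.Seqs_def disjoint_family_on_def)
    also have "\<dots> = (\<Sum>s\<in>S. (1 / real m) ^ k)"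
      by (rule sum.cong) (use pw(1) in \<open>auto simp: S_def R.Seqs_def\<close>)
    also have "\<dots> = real (card S) / real m ^ k" by (simp add: power_one_over)
    also have "real (card S) = (\<Sum>s\<in>R.Seqs k. RR.ind B (R.run st0 s))"
      unfolding S_def RR.ind_def by (simp add: sum.inter_filter[OF R.finite_Seqs, symmetric])
    finally show ?thesis by (simp add: R.Ex_def)
  qed
  show ?thesis
  proof (intro conjI allI impI)
    fix \<epsilon> :: real assume e: "\<epsilon> > 0"
    have "(\<lambda>k. R.Ex st0 k (RR.ind (\<lambda>z. ereal \<epsilon> < \<bar>objF m f g z - objF m f g xs\<bar>))) \<longlonglongrightarrow> 0"
      by (rule RR.ind_lim[OF R.BD_Kc_nonneg[OF e] R.BD_F[OF e]])
    moreover have "(\<lambda>k. measure M {\<omega>\<in>space M. ereal \<epsilon> < \<bar>objF m f g (x k \<omega>) - objF m f g xs\<bar>})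
       = (\<lambda>k. R.Ex st0 k (RR.ind (\<lambda>z. ereal \<epsilon> < \<bar>objF m f g z - objF m f g xs\<bar>)))"
      using meq[of "\<lambda>z. ereal \<epsilon> < \<bar>objF m f g z - objF m f g xs\<bar>"] by simp
    ultimately show "(\<lambda>k. measure M {\<omega>\<in>space M. ereal \<epsilon> < \<bar>F (x k \<omega>) - F xs\<bar>}) \<longlonglongrightarrow> 0"
      unfolding F_def by simp
  next
    fix \<epsilon> :: real assume e: "\<epsilon> > 0"
    have Kc: "0 \<le> 1 / (R.cc * \<epsilon>\<^sup>2)" using R.cc_pos by simp
    have "(\<lambda>k. R.Ex st0 k (RR.ind (\<lambda>z. \<epsilon> < norm (R.res z)))) \<longlonglongrightarrow> 0"
      by (rule RR.ind_lim[OF Kc R.BD_R[OF e]])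
    moreover have "measure M {\<omega>\<in>space M. \<epsilon> < norm (r k \<omega>)} = measure M {\<omega>\<in>space M. \<epsilon> < norm (R.res (x k \<omega>))}" for k
      using K1[of k] by (intro arg_cong[where f = "measure M"]) auto
    moreover have "measure M {\<omega>\<in>space M. \<epsilon> < norm (R.res (x k \<omega>))} = R.Ex st0 k (RR.ind (\<lambda>z. \<epsilon> < norm (R.res z)))" for k
      using meq[of "\<lambda>z. \<epsilon> < norm (R.res z)" k] by simp
    ultimately show "(\<lambda>k. measure M {\<omega>\<in>space M. \<epsilon> < norm (r k \<omega>)}) \<longlonglongrightarrow> 0"
      by simp
  qed
qed


end
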